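(* Let $m\ge 2$, let $M$ be the graph consisting of $m$ pairwise disjoint edges, and let $G$ be a simple graph with $m$ edges that is not a matching (i.e. some vertex of $G$ has degree at least $2$). Then (1) $c_s(M)>c_s(G)$ for every $s\in\{2,\dots,m\}$, and (2) $\lambda(M)\le\lambda(G)$ and $\Phi(\lambda,M)>\Phi(\lambda,G)$ for every real $\lambda\ge\lambda(G)$.
   Context: All graphs are finite, undirected, without loops. For a graph $G$ on $n$ vertices let $L(G)=D(G)-A(G)$ be its Laplacian matrix ($D(G)$ the diagonal matrix of vertex degrees, $A(G)$ the adjacency matrix), with eigenvalues $0=\lambda_0(G)\le\lambda_1(G)\le\dots\le\lambda_{n-1}(G)$; put $\lambda(G)=\lambda_{n-1}(G)$. Write $\det(\lambda I-L(G))=\lambda P(\lambda,G)$ with $P(\lambda,G)=\sum_{s=0}^{n-1}(-1)^s c_s(G)\lambda^{n-1-s}$ (the Laplacian polynomial); so $c_s(G)$ is the $s$-th elementary symmetric polynomial in $\lambda_1(G),\dots,\lambda_{n-1}(G)$. Equivalently $c_s(G)=\sum_F\gamma(F)$, the sum over spanning forests $F$ of $G$ with $s$ edges, where $\gamma(F)$ is the product of the numbers of vertices of the components of $F$; in particular $c_s(G)$ does not change when isolated vertices are added, and we set $c_s(G)=0$ for $s\ge n$. For a graph $G$ with $n$ vertices and $m$ edges put $\Phi(\lambda,G)=\lambda^{m-n+1}P(\lambda,G)$ (for $\lambda>0$). *)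

theory Defs
  imports "Jordan_Normal_Form.Char_Poly"
begin

definition simple_graph :: "nat \<Rightarrow> nat set set \<Rightarrow> bool" where
  "simple_graph n E \<longleftrightarrow> E \<subseteq> {e. \<exists>i j. i < n \<and> j < n \<and> i \<noteq> j \<and> e = {i, j}}"

definition degree :: "nat set set \<Rightarrow> nat \<Rightarrow> nat" where
  "degree E v = card {e \<in> E. v \<in> e}"

definition laplacian :: "nat \<Rightarrow> nat set set \<Rightarrow> real mat" where
  "laplacian n E = mat n n (\<lambda>(i, j). if i = j then real (degree E i)
                                      else if {i, j} \<in> E then -1 else 0)"

definition lap_poly :: "nat \<Rightarrow> nat set set \<Rightarrow> real poly" where
  "lap_poly n E = char_poly (laplacian n E) div [:0, 1:]"

definition lap_coeff :: "nat \<Rightarrow> nat set set \<Rightarrow> nat \<Rightarrow> real" where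
  "lap_coeff n E s = (if s < n then (-1) ^ s * coeff (lap_poly n E) (n - 1 - s) else 0)"

definition lap_lambda :: "nat \<Rightarrow> nat set set \<Rightarrow> real" where
  "lap_lambda n E = Max {x. eigenvalue (laplacian n E) x}"

definition lap_Phi :: "nat \<Rightarrow> nat set set \<Rightarrow> real \<Rightarrow> real" where
  "lap_Phi n E x = x powi (int (card E) - int n + 1) * poly (lap_poly n E) x"

definition matching_edges :: "nat \<Rightarrow> nat set set" where
  "matching_edges m = {{2 * i, 2 * i + 1} | i. i < m}"

end

theory Submission
  imports Defs "Jordan_Normal_Form.Schur_Decomposition"
begin


fun esym :: "real list \<Rightarrow> nat \<Rightarrow> real" where
  "esym xs 0 = 1"
| "esym [] (Suc k) = 0"
| "esym (x#xs) (Suc k) = esym xs (Suc k) + x * esym xs k"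

lemma esym_big: "length xs < k \<Longrightarrow> esym xs k = 0"
proof (induction xs arbitrary: k)
  case Nil then show ?case by (cases k) auto
next
  case (Cons x xs) then show ?case by (cases k) auto
qed

lemma esym_coeff:
  "k \<le> length xs \<Longrightarrow> coeff (\<Prod>x\<leftarrow>xs. [:-x,1:]) (length xs - k) = (-1)^k * esym xs k"
proof (induction xs arbitrary: k)
  case Nil then show ?case by simp
next
  case (Cons x xs)
  let ?p = "\<Prod>x\<leftarrow>xs. [:-x,1:]"
  have deg: "Polynomial.degree ?p = length xs"
    by (subst degree_prod_list_eq) (auto simp: o_def sum_list_triv)
  have eq: "(\<Prod>x\<leftarrow>x#xs. [:-x,1:]) = pCons 0 ?p - Polynomial.smult x ?p"
    by (simp add: algebra_simps)
  show ?case
  proof (cases k)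
    case 0
    have "coeff ?p (length xs) = 1" using Cons.IH[of 0] by simp
    moreover have "coeff ?p (Suc (length xs)) = 0" using deg by (simp add: coeff_eq_0)
    ultimately show ?thesis using 0 by (simp add: eq)
  next
    case (Suc j)
    show ?thesis
    proof (cases "j = length xs")
      case True
      then show ?thesis using Suc Cons.IH[of j] by (simp add: eq esym_big)
    next
      case False
      with Suc Cons.prems have j: "j < length xs" by simp
      then have "length (x#xs) - k = Suc (length xs - Suc j)" using Suc by simp
      then show ?thesis using Suc Cons.IH[of j] Cons.IH[of "Suc j"] j
        by (simp add: eq algebra_simps)
    qed
  qed
qed

lemma esym_perm: "mset xs = mset ys \<Longrightarrow> esym xs k = esym ys k"
proof -
  assume m: "mset xs = mset ys"
  then have len: "length xs = length ys" using mset_eq_length by blast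
  have pr: "(\<Prod>x\<leftarrow>xs. [:-x,1:]) = (\<Prod>x\<leftarrow>ys. [:-x,1:])"
    by (metis m mset_map prod_mset_prod_list)
  show ?thesis
  proof (cases "k \<le> length xs")
    case True
    then show ?thesis using esym_coeff[of k xs] esym_coeff[of k ys] pr len by simp
  next
    case False then show ?thesis using len by (simp add: esym_big)
  qed
qed

lemma esym_nonneg: "(\<forall>z\<in>set xs. 0 \<le> z) \<Longrightarrow> 0 \<le> esym xs k"
proof (induction xs arbitrary: k)
  case Nil then show ?case by (cases k) auto
next
  case (Cons x xs) then show ?case by (cases k) auto
qed

lemma esym_pos: "(\<forall>z\<in>set xs. 0 \<le> z) \<Longrightarrow> k \<le> length (filter (\<lambda>z. z > 0) xs) \<Longrightarrow> 0 < esym xs k"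
proof (induction xs arbitrary: k)
  case Nil then show ?case by (cases k) auto
next
  case (Cons x xs)
  show ?case
  proof (cases k)
    case 0 then show ?thesis by simp
  next
    case (Suc j)
    have nn: "0 \<le> esym xs k" "0 \<le> esym xs j" using Cons.prems by (auto intro: esym_nonneg)
    show ?thesis
    proof (cases "x > 0")
      case True
      then have "0 < esym xs j" using Cons Suc by auto
      then show ?thesis using Suc True nn by (auto intro: add_nonneg_pos)
    next
      case False
      then have "0 < esym xs k" using Cons Suc by auto
      then show ?thesis using Suc False Cons.prems nn by (auto intro: add_pos_nonneg)
    qed
  qed
qed

lemma esym_pos_count: "(\<forall>z\<in>set xs. 0 \<le> z) \<Longrightarrow> 0 < esym xs k \<Longrightarrow> k \<le> length (filter (\<lambda>z. z > 0) xs)"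
proof (induction xs arbitrary: k)
  case Nil then show ?case by (cases k) auto
next
  case (Cons x xs)
  show ?case
  proof (cases k)
    case 0 then show ?thesis by simp
  next
    case (Suc j)
    show ?thesis
    proof (cases "x > 0")
      case True
      have "esym xs k > 0 \<or> esym xs j > 0"
      proof (rule ccontr)
        assume "\<not> ?thesis"
        then have "esym xs k \<le> 0" "esym xs j \<le> 0" by auto
        then have "esym (x#xs) k \<le> 0" using Suc True
          by (simp add: add_nonpos_nonpos mult_nonneg_nonpos)
        then show False using Cons.prems by simp
      qed
      moreover have "j \<le> k" using Suc by simp
      ultimately have "j \<le> length (filter (\<lambda>z. z > 0) xs)" using Cons.IH Cons.prems by force
      then show ?thesis using Suc True by simp
    next
      case False
      then have "x = 0" using Cons.prems by force
      then show ?thesis using Cons Suc by auto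
    qed
  qed
qed

lemma esym_replicate: "esym (replicate m c) k = of_nat (m choose k) * c ^ k"
proof (induction m arbitrary: k)
  case 0 then show ?case by (cases k) auto
next
  case (Suc m) then show ?case by (cases k) (auto simp: algebra_simps)
qed

lemma esym_two: "esym (a#b#zs) (Suc (Suc k)) =
   esym zs (Suc (Suc k)) + (a + b) * esym zs (Suc k) + a * b * esym zs k"
  by (simp add: algebra_simps)

lemma sum_list_neg: "(\<forall>z\<in>set ys. z \<le> (0::real)) \<Longrightarrow> (\<exists>z\<in>set ys. z < 0) \<Longrightarrow> sum_list ys < 0"
proof (induction ys)
  case Nil then show ?case by simp
next
  case (Cons y ys)
  show ?case
  proof (cases "y < 0")
    case True
    have "sum_list ys \<le> 0" using Cons.prems by (intro sum_list_nonpos) auto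
    then show ?thesis using True by simp
  next
    case False then show ?thesis using Cons by auto
  qed
qed

lemma exists_below_above:
  fixes xs :: "real list"
  assumes s: "sum_list xs = of_nat (length xs) * \<mu>" and z: "z \<in> set xs" "z \<noteq> \<mu>"
  shows "\<exists>a\<in>set xs. \<exists>b\<in>set xs. a < \<mu> \<and> \<mu> < b"
proof -
  have s0: "sum_list (map (\<lambda>z. z - \<mu>) xs) = 0"
    using s by (simp add: sum_list_subtractf sum_list_triv)
  have s1: "sum_list (map (\<lambda>z. \<mu> - z) xs) = 0"
    using s by (simp add: sum_list_subtractf sum_list_triv)
  have a: "\<exists>a\<in>set xs. a < \<mu>"
  proof (rule ccontr)
    assume "\<not> ?thesis"
    then have "\<forall>w\<in>set (map (\<lambda>z. \<mu> - z) xs). w \<le> 0" "\<exists>w\<in>set (map (\<lambda>z. \<mu> - z) xs). w < 0"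
      using z by force+
    then show False using sum_list_neg s1 by fastforce
  qed
  have b: "\<exists>b\<in>set xs. \<mu> < b"
  proof (rule ccontr)
    assume "\<not> ?thesis"
    then have "\<forall>w\<in>set (map (\<lambda>z. z - \<mu>) xs). w \<le> 0" "\<exists>w\<in>set (map (\<lambda>z. z - \<mu>) xs). w < 0"
      using z by force+
    then show False using sum_list_neg s0 by fastforce
  qed
  from a b show ?thesis by blast
qed

lemma split_two:
  assumes "a \<in> set xs" "b \<in> set xs" "a \<noteq> b"
  shows "mset xs = mset (a # b # remove1 b (remove1 a xs))"
proof -
  have b: "b \<in> set (remove1 a xs)" using assms by simp
  have "mset xs = add_mset a (mset (remove1 a xs))" using assms(1)
    by (simp add: mset_remove1 insert_DiffM)
  also have "mset (remove1 a xs) = add_mset b (mset (remove1 b (remove1 a xs)))" using b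
    by (metis insert_DiffM mset_remove1 set_mset_mset)
  finally show ?thesis by simp
qed

lemma smoothing:
  fixes F :: "real list \<Rightarrow> real" and P :: "real \<Rightarrow> bool"
  assumes perm: "\<And>xs ys. mset xs = mset ys \<Longrightarrow> F xs = F ys"
  and step: "\<And>a b c zs. (\<forall>z\<in>set (a#b#zs). P z) \<Longrightarrow> a \<le> c \<Longrightarrow> c \<le> b \<Longrightarrow> F (a#b#zs) \<le> F (c#(a+b-c)#zs)"
  and betw: "\<And>a b c. P a \<Longrightarrow> P b \<Longrightarrow> a \<le> c \<Longrightarrow> c \<le> b \<Longrightarrow> P c"
  shows "(\<forall>z\<in>set xs. P z) \<Longrightarrow> sum_list xs = of_nat (length xs) * \<mu> \<Longrightarrow> F xs \<le> F (replicate (length xs) \<mu>)"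
proof (induction "length (filter (\<lambda>z. z \<noteq> \<mu>) xs)" arbitrary: xs rule: less_induct)
  case less
  show ?case
  proof (cases "\<forall>z\<in>set xs. z = \<mu>")
    case True
    then show ?thesis using replicate_length_same[of xs \<mu>] by simp
  next
    case False
    then obtain z where z: "z \<in> set xs" "z \<noteq> \<mu>" by blast
    from exists_below_above[OF less.prems(2) z] obtain a b where
      ab: "a \<in> set xs" "b \<in> set xs" "a < \<mu>" "\<mu> < b" by blast
    define zs where "zs = remove1 b (remove1 a xs)"
    have ms: "mset xs = mset (a#b#zs)" unfolding zs_def using split_two ab by force
    have setx: "set xs = set (a#b#zs)" using ms by (metis set_mset_mset)
    have lenx: "length xs = length (a#b#zs)" using ms mset_eq_length by blast
    define ys where "ys = \<mu> # (a+b-\<mu>) # zs"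
    have Pys: "\<forall>z\<in>set ys. P z"
      using less.prems(1) setx ab betw[of a b \<mu>] betw[of a b "a+b-\<mu>"] unfolding ys_def by auto
    have sumx: "sum_list xs = sum_list (a#b#zs)" using ms by (metis sum_mset_sum_list)
    have sumy: "sum_list ys = of_nat (length ys) * \<mu>"
      using less.prems(2) sumx lenx unfolding ys_def by simp
    have cnt: "length (filter (\<lambda>z. z \<noteq> \<mu>) xs) = length (filter (\<lambda>z. z \<noteq> \<mu>) (a#b#zs))"
      using ms by (metis mset_filter size_mset)
    have lt: "length (filter (\<lambda>z. z \<noteq> \<mu>) ys) < length (filter (\<lambda>z. z \<noteq> \<mu>) xs)"
      unfolding cnt ys_def using ab by auto
    have "F xs = F (a#b#zs)" using perm ms by blast
    also have "\<dots> \<le> F ys" unfolding ys_def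
      using step[of a b zs \<mu>] less.prems(1) setx ab by auto
    also have "\<dots> \<le> F (replicate (length ys) \<mu>)" using less.hyps[OF lt Pys sumy] .
    also have "length ys = length xs" using lenx unfolding ys_def by simp
    finally show ?thesis .
  qed
qed



lemma esym_smooth:
  "(\<forall>z\<in>set (a#b#zs). 0 \<le> z) \<Longrightarrow> a \<le> c \<Longrightarrow> c \<le> b \<Longrightarrow>
   esym (a#b#zs) s \<le> esym (c#(a+b-c)#zs) s"
proof (cases s)
  case 0 then show ?thesis by simp
next
  case (Suc k)
  assume nn: "\<forall>z\<in>set (a#b#zs). 0 \<le> z" and ac: "a \<le> c" and cb: "c \<le> b"
  show ?thesis
  proof (cases k)
    case 0 then show ?thesis using Suc by simp
  next
    case (Suc j)
    have "a * b \<le> c * (a + b - c)"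
    proof -
      have "0 \<le> (c - a) * (b - c)" using ac cb by simp
      then show ?thesis by (simp add: algebra_simps)
    qed
    moreover have "0 \<le> esym zs j" using nn by (intro esym_nonneg) auto
    ultimately have "a * b * esym zs j \<le> c * (a + b - c) * esym zs j"
      by (intro mult_right_mono) auto
    then show ?thesis using \<open>s = Suc k\<close> Suc by (simp only: esym_two) simp
  qed
qed

lemma esym_le_replicate:
  "(\<forall>z\<in>set xs. 0 \<le> z) \<Longrightarrow> sum_list xs = of_nat (length xs) * \<mu> \<Longrightarrow>
   esym xs s \<le> esym (replicate (length xs) \<mu>) s"
proof (rule smoothing[where F = "\<lambda>l. esym l s" and P = "\<lambda>z. 0 \<le> z"])
  fix xs ys :: "real list" assume "mset xs = mset ys"
  then show "esym xs s = esym ys s" by (rule esym_perm)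
next
  fix a b c :: real and zs
  assume "\<forall>z\<in>set (a#b#zs). 0 \<le> z" "a \<le> c" "c \<le> b"
  then show "esym (a#b#zs) s \<le> esym (c#(a+b-c)#zs) s" by (rule esym_smooth)
qed auto

lemma esym_strict:
  fixes xs :: "real list"
  assumes nn: "\<forall>z\<in>set xs. 0 \<le> z" and sum: "sum_list xs = of_nat (length xs) * 2"
    and ne: "\<exists>z\<in>set xs. z \<noteq> 2" and s: "2 \<le> s" "s \<le> length xs"
  shows "esym xs s < of_nat (length xs choose s) * 2 ^ s"
proof -
  let ?m = "length xs"
  have rpos: "0 < of_nat (?m choose s) * (2::real) ^ s" using s by simp
  show ?thesis
  proof (cases "esym xs s > 0")
    case False then show ?thesis using rpos by simp
  next
    case True
    from ne obtain z where z: "z \<in> set xs" "z \<noteq> 2" by blast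
    from exists_below_above[OF sum z] obtain a b where
      ab: "a \<in> set xs" "b \<in> set xs" "a < 2" "2 < b" by blast
    define zs where "zs = remove1 b (remove1 a xs)"
    have ms: "mset xs = mset (a#b#zs)" unfolding zs_def using split_two ab by force
    have setx: "set xs = set (a#b#zs)" using ms by (metis set_mset_mset)
    have lenx: "length xs = length (a#b#zs)" using ms mset_eq_length by blast
    obtain k where sk: "s = Suc (Suc k)" using s by (metis add_2_eq_Suc le_Suc_ex)
    have e1: "esym xs s = esym (a#b#zs) s" using esym_perm[OF ms] .
    have nn2: "\<forall>z\<in>set (a#b#zs). 0 \<le> z" using nn setx by simp
    have "s \<le> length (filter (\<lambda>z. z > 0) (a#b#zs))"
      using esym_pos_count[OF nn2] True e1 by simp
    then have "k \<le> length (filter (\<lambda>z. z > 0) zs)" using sk by (auto split: if_splits)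
    then have C: "0 < esym zs k" using nn2 by (intro esym_pos) auto
    define ys where "ys = 2 # (a+b-2) # zs"
    have "a * b < 2 * (a + b - 2)"
    proof -
      have "0 < (2 - a) * (b - 2)" using ab by simp
      then show ?thesis by (simp add: algebra_simps)
    qed
    then have "a * b * esym zs k < 2 * (a + b - 2) * esym zs k"
      using C by (intro mult_strict_right_mono) auto
    then have "esym (a#b#zs) s < esym ys s" unfolding ys_def sk esym_two by simp
    also have "esym ys s \<le> esym (replicate (length ys) 2) s"
    proof (rule esym_le_replicate)
      show "\<forall>z\<in>set ys. 0 \<le> z" using nn2 ab unfolding ys_def by auto
      show "sum_list ys = of_nat (length ys) * 2" using sum lenx ms
        unfolding ys_def
      proof -
        have "sum_list xs = sum_list (a#b#zs)" by (metis ms sum_mset_sum_list)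
        then show "sum_list (2 # (a + b - 2) # zs) = real (length (2 # (a + b - 2) # zs)) * 2"
          using sum lenx by simp
      qed
    qed
    also have "length ys = ?m" using lenx unfolding ys_def by simp
    finally show ?thesis using e1 esym_replicate by simp
  qed
qed

lemma prod_list_pos': "(\<forall>z\<in>set xs. z < (x::real)) \<Longrightarrow> 0 < (\<Prod>z\<leftarrow>xs. x - z)"
  by (induction xs) auto

lemma prod_perm: "mset xs = mset ys \<Longrightarrow> (\<Prod>z\<leftarrow>xs. (x::real) - z) = (\<Prod>z\<leftarrow>ys. x - z)"
  by (metis mset_map prod_mset_prod_list)

lemma prod_smooth:
  "(\<forall>z\<in>set (a#b#zs). z \<le> (x::real)) \<Longrightarrow> a \<le> c \<Longrightarrow> c \<le> b \<Longrightarrow>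
   (\<Prod>z\<leftarrow>a#b#zs. x - z) \<le> (\<Prod>z\<leftarrow>c#(a+b-c)#zs. x - z)"
proof -
  assume le: "\<forall>z\<in>set (a#b#zs). z \<le> x" and ac: "a \<le> c" and cb: "c \<le> b"
  have R: "0 \<le> (\<Prod>z\<leftarrow>zs. x - z)" using le by (intro prod_list_nonneg) auto
  have "(x - a) * (x - b) \<le> (x - c) * (x - (a + b - c))"
  proof -
    have "0 \<le> (c - a) * (b - c)" using ac cb by simp
    then show ?thesis by (simp add: algebra_simps)
  qed
  then have "(x - a) * (x - b) * (\<Prod>z\<leftarrow>zs. x - z) \<le> (x - c) * (x - (a + b - c)) * (\<Prod>z\<leftarrow>zs. x - z)"
    using R by (intro mult_right_mono) auto
  then show ?thesis by (simp add: mult.assoc)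
qed

lemma prod_strict:
  fixes xs :: "real list"
  assumes le: "\<forall>z\<in>set xs. z \<le> x" and sum: "sum_list xs = of_nat (length xs) * 2"
    and ne: "\<exists>z\<in>set xs. z \<noteq> 2"
  shows "(\<Prod>z\<leftarrow>xs. x - z) < (x - 2) ^ length xs"
proof -
  from ne obtain z where z: "z \<in> set xs" "z \<noteq> 2" by blast
  from exists_below_above[OF sum z] obtain a b where
    ab: "a \<in> set xs" "b \<in> set xs" "a < 2" "2 < b" by blast
  have x2: "x > 2" using le ab by force
  have rpos: "0 < (x - 2) ^ length xs" using x2 by simp
  show ?thesis
  proof (cases "\<exists>z\<in>set xs. z = x")
    case True
    then have "0 \<in> set (map (\<lambda>z. x - z) xs)" by force
    then have "(\<Prod>z\<leftarrow>xs. x - z) = 0" by (simp only: prod_list_zero_iff)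
    then show ?thesis using rpos by linarith
  next
    case False
    then have lt: "\<forall>z\<in>set xs. z < x" using le by (metis order_le_less)
    define zs where "zs = remove1 b (remove1 a xs)"
    have ms: "mset xs = mset (a#b#zs)" unfolding zs_def using split_two ab by force
    have setx: "set xs = set (a#b#zs)" using ms by (metis set_mset_mset)
    have lenx: "length xs = length (a#b#zs)" using ms mset_eq_length by blast
    have R: "0 < (\<Prod>z\<leftarrow>zs. x - z)" using lt setx by (intro prod_list_pos') auto
    define ys where "ys = 2 # (a+b-2) # zs"
    have "(x - a) * (x - b) < (x - 2) * (x - (a + b - 2))"
    proof -
      have "0 < (2 - a) * (b - 2)" using ab by simp
      then show ?thesis by (simp add: algebra_simps)
    qed
    then have "(x - a) * (x - b) * (\<Prod>z\<leftarrow>zs. x - z) < (x - 2) * (x - (a + b - 2)) * (\<Prod>z\<leftarrow>zs. x - z)"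
      using R by (intro mult_strict_right_mono) auto
    then have "(\<Prod>z\<leftarrow>xs. x - z) < (\<Prod>z\<leftarrow>ys. x - z)"
      unfolding prod_perm[OF ms] ys_def by (simp add: mult.assoc)
    also have "(\<Prod>z\<leftarrow>ys. x - z) \<le> (\<Prod>z\<leftarrow>replicate (length ys) 2. x - z)"
    proof (rule smoothing[where F = "\<lambda>l. \<Prod>z\<leftarrow>l. x - z" and P = "\<lambda>z. z \<le> x"])
      show "\<forall>z\<in>set ys. z \<le> x" using le setx ab unfolding ys_def by auto
      show "sum_list ys = of_nat (length ys) * 2" using sum lenx ms
        unfolding ys_def
      proof -
        have "sum_list xs = sum_list (a#b#zs)" by (metis ms sum_mset_sum_list)
        then show "sum_list (2 # (a + b - 2) # zs) = real (length (2 # (a + b - 2) # zs)) * 2"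
          using sum lenx by simp
      qed
    next
      fix xs ys :: "real list" assume "mset xs = mset ys"
      then show "(\<Prod>z\<leftarrow>xs. x - z) = (\<Prod>z\<leftarrow>ys. x - z)" by (rule prod_perm)
    next
      fix a b c :: real and zs
      assume "\<forall>z\<in>set (a#b#zs). z \<le> x" "a \<le> c" "c \<le> b"
      then show "(\<Prod>z\<leftarrow>a#b#zs. x - z) \<le> (\<Prod>z\<leftarrow>c#(a+b-c)#zs. x - z)" by (rule prod_smooth)
    qed auto
    also have "length ys = length xs" using lenx unfolding ys_def by simp
    finally show ?thesis by (simp add: prod_list_replicate)
  qed
qed



lemma const_poly_semiring_hom: "semiring_hom (\<lambda>a::real. [:a:])"
  by unfold_locales (auto simp: one_pCons)

lemma diag_one_mat: "diag_mat (1\<^sub>m n) = replicate n 1"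
  by (simp add: diag_mat_def list_eq_iff_nth_eq)

lemma diag_smult_one_mat: "diag_mat ((a::'a::comm_ring_1) \<cdot>\<^sub>m 1\<^sub>m n) = replicate n a"
  by (simp add: diag_mat_def list_eq_iff_nth_eq)

lemma ut_one: "upper_triangular (1\<^sub>m n)"
  by (simp add: upper_triangular_def)

lemma ut_smult_one: "upper_triangular ((a::'a::comm_ring_1) \<cdot>\<^sub>m 1\<^sub>m n)"
  by (simp add: upper_triangular_def)

lemma sylvester_char_poly:
  fixes B :: "real mat"
  assumes B: "B \<in> carrier_mat n m"
  shows "char_poly (B * transpose_mat B) * [:0,1:] ^ m = [:0,1:] ^ n * char_poly (transpose_mat B * B)"
proof -
  define x :: "real poly" where "x = [:0,1:]"
  define X' where "X' = map_mat (\<lambda>a. [:a:]) B"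
  define Xt where "Xt = transpose_mat X'"
  have X'c: "X' \<in> carrier_mat n m" and Xtc: "Xt \<in> carrier_mat m n"
    using B unfolding X'_def Xt_def by auto
  interpret h: semiring_hom "\<lambda>a::real. [:a:]" by (rule const_poly_semiring_hom)
  have BBt: "B * transpose_mat B \<in> carrier_mat n n" and BtB: "transpose_mat B * B \<in> carrier_mat m m"
    using B by auto
  have hL: "map_mat (\<lambda>a. [:a:]) (B * transpose_mat B) = X' * Xt"
    unfolding X'_def Xt_def using B by (simp add: h.mat_hom_mult map_mat_transpose)
  have hK: "map_mat (\<lambda>a. [:a:]) (transpose_mat B * B) = Xt * X'"
    unfolding X'_def Xt_def using B by (simp add: h.mat_hom_mult map_mat_transpose)
  have neg: "\<And>A :: real mat. map_mat (\<lambda>a. [:-a:]) A = - map_mat (\<lambda>a. [:a:]) A"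
    by (intro eq_matI) auto
  have cpL: "char_poly_matrix (B * transpose_mat B) = x \<cdot>\<^sub>m 1\<^sub>m n - X' * Xt"
    unfolding char_poly_matrix_def x_def neg hL using BBt X'c Xtc
    by (intro eq_matI) auto
  have cpK: "char_poly_matrix (transpose_mat B * B) = x \<cdot>\<^sub>m 1\<^sub>m m - Xt * X'"
    unfolding char_poly_matrix_def x_def neg hK using BtB X'c Xtc
    by (intro eq_matI) auto
  define X where "X = four_block_mat (x \<cdot>\<^sub>m 1\<^sub>m n) X' Xt (1\<^sub>m m)"
  define Z where "Z = four_block_mat (1\<^sub>m n) (- X') (0\<^sub>m m n) (1\<^sub>m m)"
  define W where "W = four_block_mat (1\<^sub>m n) (- X') (0\<^sub>m m n) (x \<cdot>\<^sub>m 1\<^sub>m m)"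
  have Xc: "X \<in> carrier_mat (n+m) (n+m)" unfolding X_def by auto
  have Zc: "Z \<in> carrier_mat (n+m) (n+m)" unfolding Z_def by auto
  have Wc: "W \<in> carrier_mat (n+m) (n+m)" unfolding W_def by auto
  have detZ: "det Z = 1"
  proof -
    have "upper_triangular Z" unfolding Z_def
      by (rule upper_triangular_four_block[of _ n _ m]) (auto simp: ut_one)
    then have "det Z = prod_list (diag_mat Z)" using Zc by (rule det_upper_triangular)
    also have "diag_mat Z = replicate (n+m) 1" unfolding Z_def
      by (subst diag_four_block_mat[of _ n _ m]) (auto simp: diag_one_mat replicate_add)
    finally show ?thesis by simp
  qed
  have detW: "det W = x ^ m"
  proof -
    have "upper_triangular W" unfolding W_def
      by (rule upper_triangular_four_block[of _ n _ m]) (auto simp: ut_one ut_smult_one)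
    then have "det W = prod_list (diag_mat W)" using Wc by (rule det_upper_triangular)
    also have "diag_mat W = replicate n 1 @ replicate m x" unfolding W_def
      by (subst diag_four_block_mat[of _ n _ m]) (auto simp: diag_one_mat diag_smult_one_mat)
    finally show ?thesis by simp
  qed
  have ZX: "Z * X = four_block_mat (x \<cdot>\<^sub>m 1\<^sub>m n - X' * Xt) (0\<^sub>m n m) Xt (1\<^sub>m m)"
  proof -
    have "Z * X = four_block_mat (1\<^sub>m n * (x \<cdot>\<^sub>m 1\<^sub>m n) + (- X') * Xt) (1\<^sub>m n * X' + (- X') * 1\<^sub>m m)
       (0\<^sub>m m n * (x \<cdot>\<^sub>m 1\<^sub>m n) + 1\<^sub>m m * Xt) (0\<^sub>m m n * X' + 1\<^sub>m m * 1\<^sub>m m)"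
      unfolding Z_def X_def
      by (rule mult_four_block_mat) (use X'c Xtc in auto)
    also have "\<dots> = four_block_mat (x \<cdot>\<^sub>m 1\<^sub>m n - X' * Xt) (0\<^sub>m n m) Xt (1\<^sub>m m)"
    proof -
      have 1: "1\<^sub>m n * (x \<cdot>\<^sub>m 1\<^sub>m n) + (- X') * Xt = x \<cdot>\<^sub>m 1\<^sub>m n - X' * Xt"
        using X'c Xtc by (intro eq_matI) (auto simp: uminus_mult_left_mat)
      have 2: "1\<^sub>m n * X' + (- X') * 1\<^sub>m m = 0\<^sub>m n m"
        using X'c by (intro eq_matI) auto
      have 3: "0\<^sub>m m n * (x \<cdot>\<^sub>m 1\<^sub>m n) + 1\<^sub>m m * Xt = Xt"
        using Xtc by (intro eq_matI) auto
      have 4: "0\<^sub>m m n * X' + 1\<^sub>m m * 1\<^sub>m m = 1\<^sub>m m"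
        using X'c by (intro eq_matI) auto
      show ?thesis unfolding 1 2 3 4 ..
    qed
    finally show ?thesis .
  qed
  have XW: "X * W = four_block_mat (x \<cdot>\<^sub>m 1\<^sub>m n) (0\<^sub>m n m) Xt (x \<cdot>\<^sub>m 1\<^sub>m m - Xt * X')"
  proof -
    have "X * W = four_block_mat ((x \<cdot>\<^sub>m 1\<^sub>m n) * 1\<^sub>m n + X' * 0\<^sub>m m n) ((x \<cdot>\<^sub>m 1\<^sub>m n) * (- X') + X' * (x \<cdot>\<^sub>m 1\<^sub>m m))
       (Xt * 1\<^sub>m n + 1\<^sub>m m * 0\<^sub>m m n) (Xt * (- X') + 1\<^sub>m m * (x \<cdot>\<^sub>m 1\<^sub>m m))"
      unfolding W_def X_def
      by (rule mult_four_block_mat) (use X'c Xtc in auto)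
    also have "\<dots> = four_block_mat (x \<cdot>\<^sub>m 1\<^sub>m n) (0\<^sub>m n m) Xt (x \<cdot>\<^sub>m 1\<^sub>m m - Xt * X')"
    proof -
      have 1: "(x \<cdot>\<^sub>m 1\<^sub>m n) * 1\<^sub>m n + X' * 0\<^sub>m m n = x \<cdot>\<^sub>m 1\<^sub>m n"
        using X'c by (intro eq_matI) auto
      have 2: "(x \<cdot>\<^sub>m 1\<^sub>m n) * (- X') + X' * (x \<cdot>\<^sub>m 1\<^sub>m m) = 0\<^sub>m n m"
      proof -
        have a: "(x \<cdot>\<^sub>m 1\<^sub>m n) * (- X') = - (x \<cdot>\<^sub>m X')"
          using X'c by (simp add: mult_smult_assoc_mat[of _ n n] uminus_mult_right_mat)
        have b: "X' * (x \<cdot>\<^sub>m 1\<^sub>m m) = x \<cdot>\<^sub>m X'"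
          using X'c by (subst mult_smult_distrib[OF X'c one_carrier_mat]) simp
        show ?thesis unfolding a b using X'c by (intro eq_matI) auto
      qed
      have 3: "Xt * 1\<^sub>m n + 1\<^sub>m m * 0\<^sub>m m n = Xt"
        using Xtc by (intro eq_matI) auto
      have 4: "Xt * (- X') + 1\<^sub>m m * (x \<cdot>\<^sub>m 1\<^sub>m m) = x \<cdot>\<^sub>m 1\<^sub>m m - Xt * X'"
        using X'c Xtc by (intro eq_matI) (auto simp: uminus_mult_right_mat)
      show ?thesis unfolding 1 2 3 4 ..
    qed
    finally show ?thesis .
  qed
  have "det (Z * X) = det (x \<cdot>\<^sub>m 1\<^sub>m n - X' * Xt) * det (1\<^sub>m m :: real poly mat)"
    unfolding ZX by (rule det_four_block_mat_upper_right_zero) (use X'c Xtc in auto)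
  then have dX: "det X = char_poly (B * transpose_mat B)"
    using det_mult[OF Zc Xc] detZ unfolding char_poly_def cpL by simp
  have "det (X * W) = det (x \<cdot>\<^sub>m 1\<^sub>m n) * det (x \<cdot>\<^sub>m 1\<^sub>m m - Xt * X')"
    unfolding XW by (rule det_four_block_mat_upper_right_zero) (use X'c Xtc in auto)
  then have "det X * x ^ m = x ^ n * char_poly (transpose_mat B * B)"
    using det_mult[OF Xc Wc] detW unfolding char_poly_def cpK by simp
  then show ?thesis using dX unfolding x_def by simp
qed



definition mtr :: "'a::comm_ring_1 mat \<Rightarrow> 'a" where
  "mtr A = (\<Sum>i<dim_row A. A $$ (i,i))"

lemma mtr_mult_comm:
  fixes A B :: "'a::comm_ring_1 mat"
  assumes A: "A \<in> carrier_mat r c" and B: "B \<in> carrier_mat c r"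
  shows "mtr (A * B) = mtr (B * A)"
proof -
  have "mtr (A * B) = (\<Sum>i<r. \<Sum>j<c. A $$ (i,j) * B $$ (j,i))"
    unfolding mtr_def using A B by (auto simp: scalar_prod_def atLeast0LessThan intro!: sum.cong)
  also have "\<dots> = (\<Sum>j<c. \<Sum>i<r. B $$ (j,i) * A $$ (i,j))"
    by (subst sum.swap) (simp add: mult.commute)
  also have "\<dots> = mtr (B * A)"
    unfolding mtr_def using A B by (auto simp: scalar_prod_def atLeast0LessThan intro!: sum.cong)
  finally show ?thesis .
qed

lemma mtr_similar:
  fixes A T P Q :: "'a::comm_ring_1 mat"
  assumes "similar_mat_wit A T P Q"
  shows "mtr A = mtr T"
proof -
  from assms obtain n where c: "A \<in> carrier_mat n n" "T \<in> carrier_mat n n" "P \<in> carrier_mat n n"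
    "Q \<in> carrier_mat n n" and PQ: "Q * P = 1\<^sub>m n" and AE: "A = P * T * Q"
    unfolding similar_mat_wit_def Let_def by auto
  have "mtr A = mtr ((P * T) * Q)" using AE by simp
  also have "\<dots> = mtr (Q * (P * T))" using c by (intro mtr_mult_comm[of _ n n]) auto
  also have "Q * (P * T) = (Q * P) * T" by (rule assoc_mult_mat[OF c(4) c(3) c(2), symmetric])
  also have "\<dots> = T" using PQ c by simp
  finally show ?thesis .
qed

lemma mtr_similar':
  fixes A T P Q :: "'a::comm_ring_1 mat"
  assumes c: "T \<in> carrier_mat n n" "P \<in> carrier_mat n n" "Q \<in> carrier_mat n n"
    and PQ: "Q * P = 1\<^sub>m n" and AE: "A = P * T * Q"
  shows "mtr A = mtr T"
proof -
  have "mtr A = mtr ((P * T) * Q)" using AE by simp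
  also have "\<dots> = mtr (Q * (P * T))" using c by (intro mtr_mult_comm[of _ n n]) auto
  also have "Q * (P * T) = (Q * P) * T" by (rule assoc_mult_mat[OF c(3) c(2) c(1), symmetric])
  also have "\<dots> = T" using PQ c by simp
  finally show ?thesis .
qed

lemma mtr_ut: "upper_triangular T \<Longrightarrow> T \<in> carrier_mat n n \<Longrightarrow> mtr T = sum_list (diag_mat T)"
  unfolding mtr_def diag_mat_def by (simp add: sum_list_sum_nth atLeast0LessThan)

lemma mtr_ut_sq:
  fixes T :: "'a::comm_ring_1 mat"
  assumes ut: "upper_triangular T" and T: "T \<in> carrier_mat n n"
  shows "mtr (T * T) = sum_list (map (\<lambda>a. a^2) (diag_mat T))"
proof -
  have "\<And>i. i < n \<Longrightarrow> (T * T) $$ (i,i) = T $$ (i,i) ^ 2"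
  proof -
    fix i assume i: "i < n"
    have "(T * T) $$ (i,i) = (\<Sum>k\<in>{0..<n}. T $$ (i,k) * T $$ (k,i))"
      using T i by (simp add: scalar_prod_def)
    also have "\<dots> = (\<Sum>k\<in>{i}. T $$ (i,k) * T $$ (k,i))"
    proof (rule sum.mono_neutral_right)
      show "\<forall>k\<in>{0..<n} - {i}. T $$ (i, k) * T $$ (k, i) = 0"
      proof
        fix k assume "k \<in> {0..<n} - {i}"
        then have k: "k < n" "k < i \<or> i < k" by auto
        then show "T $$ (i, k) * T $$ (k, i) = 0"
          using ut T i unfolding upper_triangular_def by auto
      qed
    qed (use i in auto)
    finally show "(T * T) $$ (i,i) = T $$ (i,i) ^ 2" by (simp add: power2_eq_square)
  qed
  then show ?thesis
    unfolding mtr_def diag_mat_def using T by (simp add: sum_list_sum_nth atLeast0LessThan)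
qed

lemma psd_eig:
  fixes B :: "real mat"
  assumes B: "B \<in> carrier_mat n m"
    and ev: "eigenvalue (map_mat complex_of_real (transpose_mat B * B)) a"
  shows "Im a = 0 \<and> Re a \<ge> 0"
proof -
  define Bc where "Bc = map_mat complex_of_real B"
  have Bc: "Bc \<in> carrier_mat n m" using B unfolding Bc_def by auto
  have Kc: "map_mat complex_of_real (transpose_mat B * B) = transpose_mat Bc * Bc"
    unfolding Bc_def using B by (simp add: of_real_hom.mat_hom_mult map_mat_transpose)
  from ev obtain v where v: "v \<in> carrier_vec m" "v \<noteq> 0\<^sub>v m" "(transpose_mat Bc * Bc) *\<^sub>v v = a \<cdot>\<^sub>v v"
    unfolding eigenvalue_def eigenvector_def Kc using Bc by auto
  define w where "w = Bc *\<^sub>v v"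
  have w: "w \<in> carrier_vec n" unfolding w_def carrier_vec_def using Bc by simp
  have cw: "Bc *\<^sub>v conjugate v = conjugate w"
  proof (rule eq_vecI)
    fix i assume "i < dim_vec (conjugate w)"
    then have i: "i < n" using w by simp
    show "(Bc *\<^sub>v conjugate v) $ i = conjugate w $ i"
      unfolding w_def using i Bc v(1)
      by (simp add: scalar_prod_def cnj_sum Bc_def)
  qed (use w Bc in auto)
  have "((transpose_mat Bc * Bc) *\<^sub>v v) \<bullet> conjugate v = a * (v \<bullet> conjugate v)"
    unfolding v(3) using v(1) by (simp add: smult_scalar_prod_distrib[of _ m])
  moreover have "((transpose_mat Bc * Bc) *\<^sub>v v) \<bullet> conjugate v = w \<bullet> conjugate w"
  proof -
    have "(transpose_mat Bc * Bc) *\<^sub>v v = transpose_mat Bc *\<^sub>v w"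
      unfolding w_def using Bc v(1) by (simp add: assoc_mult_mat_vec[of _ m n _ m])
    moreover have "(transpose_mat Bc *\<^sub>v w) \<bullet> conjugate v = w \<bullet> (Bc *\<^sub>v conjugate v)"
      by (rule transpose_vec_mult_scalar[OF Bc _ w]) (use v(1) in simp)
    ultimately show ?thesis using cw by simp
  qed
  ultimately have eq: "a * (v \<bullet>c v) = w \<bullet>c w" by simp
  have p: "v \<bullet>c v > 0" using v by simp
  have q: "w \<bullet>c w \<ge> 0" by auto
  define p' where "p' = v \<bullet>c v"
  define q' where "q' = w \<bullet>c w"
  have p': "Im p' = 0" "Re p' > 0" using p unfolding p'_def by (auto simp: less_complex_def)
  have q': "Im q' = 0" "Re q' \<ge> 0" using q unfolding q'_def by (auto simp: less_eq_complex_def)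
  have e: "a * p' = q'" using eq unfolding p'_def q'_def .
  have "Im (a * p') = Im a * Re p'" using p' by simp
  then have ima: "Im a = 0" using e q' p' by simp
  have "Re (a * p') = Re a * Re p'" using p' by simp
  then have "Re a * Re p' \<ge> 0" using e q' by simp
  then have "Re a \<ge> 0" using p' by (simp add: zero_le_mult_iff)
  with ima show ?thesis by simp
qed

lemma of_real_sum_list': "complex_of_real (sum_list xs) = sum_list (map complex_of_real xs)"
  by (induction xs) auto

lemma spectral_data:
  fixes B :: "real mat"
  assumes B: "B \<in> carrier_mat n m"
  shows "\<exists>ks. length ks = m \<and> (\<forall>k\<in>set ks. 0 \<le> k)
    \<and> char_poly (transpose_mat B * B) = (\<Prod>a\<leftarrow>ks. [:-a,1:])
    \<and> sum_list ks = mtr (transpose_mat B * B)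
    \<and> sum_list (map (\<lambda>k. k^2) ks) = mtr ((transpose_mat B * B) * (transpose_mat B * B))"
proof -
  define K where "K = transpose_mat B * B"
  have K: "K \<in> carrier_mat m m" unfolding K_def using B by auto
  define Kc where "Kc = map_mat complex_of_real K"
  have Kc: "Kc \<in> carrier_mat m m" unfolding Kc_def using K by auto
  obtain as where as: "char_poly Kc = (\<Prod>a\<leftarrow>as. [:-a,1:])" "length as = m"
    using char_poly_factorized[OF Kc] by blast
  obtain T P Q where sch: "schur_decomposition Kc as = (T,P,Q)" by (cases "schur_decomposition Kc as") auto
  from schur_decomposition[OF Kc as(1) sch] have
    sim: "similar_mat_wit Kc T P Q" and ut: "upper_triangular T" and dg: "diag_mat T = as" by auto
  have Tc: "T \<in> carrier_mat m m" "P \<in> carrier_mat m m" "Q \<in> carrier_mat m m" "Q * P = 1\<^sub>m m"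
    and KPTQ: "Kc = P * T * Q"
    using sim Kc unfolding similar_mat_wit_def Let_def by auto
  have real: "\<And>a. a \<in> set as \<Longrightarrow> Im a = 0 \<and> Re a \<ge> 0"
  proof -
    fix a assume a: "a \<in> set as"
    have "eigenvalue Kc a" unfolding eigenvalue_root_char_poly[OF Kc] as(1)
      using a by (rule linear_poly_root)
    then show "Im a = 0 \<and> Re a \<ge> 0" using psd_eig[OF B] unfolding Kc_def K_def by blast
  qed
  define ks where "ks = map Re as"
  have asks: "as = map complex_of_real ks"
    unfolding ks_def using real by (simp add: list_eq_iff_nth_eq complex_eq_iff)
  interpret ph: map_poly_inj_idom_hom "complex_of_real" ..
  have "map_poly complex_of_real (char_poly K) = char_poly Kc"
    unfolding Kc_def by (rule of_real_hom.char_poly_hom[symmetric, OF K])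
  also have "\<dots> = map_poly complex_of_real (\<Prod>a\<leftarrow>ks. [:-a,1:])"
    unfolding as(1) asks by (simp add: ph.hom_prod_list o_def)
  finally have cp: "char_poly K = (\<Prod>a\<leftarrow>ks. [:-a,1:])" by simp
  have "complex_of_real (mtr K) = mtr Kc"
    unfolding Kc_def mtr_def using K by simp
  also have "\<dots> = mtr T" by (rule mtr_similar[OF sim])
  also have "\<dots> = sum_list as" using mtr_ut[OF ut Tc(1)] dg by simp
  also have "\<dots> = sum_list (map complex_of_real ks)" using asks by (rule arg_cong)
  also have "\<dots> = complex_of_real (sum_list ks)" by (rule of_real_sum_list'[symmetric])
  finally have tr1: "sum_list ks = mtr K" using of_real_eq_iff by metis
  have QPX: "\<And>X. X \<in> carrier_mat m m \<Longrightarrow> Q * (P * X) = X"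
  proof -
    fix X :: "complex mat" assume X: "X \<in> carrier_mat m m"
    have "Q * (P * X) = (Q * P) * X" by (rule assoc_mult_mat[OF Tc(3) Tc(2) X, symmetric])
    then show "Q * (P * X) = X" using Tc(4) X by simp
  qed
  have sq: "Kc * Kc = P * (T * T) * Q"
  proof -
    have PT: "P * T \<in> carrier_mat m m" using Tc by simp
    have TQ: "T * Q \<in> carrier_mat m m" using Tc by simp
    have PTQ: "P * T * Q \<in> carrier_mat m m" using Tc by simp
    have e1: "(P * T * Q) * (P * T * Q) = (P * T) * (Q * (P * T * Q))"
      by (rule assoc_mult_mat[OF PT Tc(3) PTQ])
    have e2: "P * T * Q = P * (T * Q)" by (rule assoc_mult_mat[OF Tc(2) Tc(1) Tc(3)])
    have e3: "Q * (P * (T * Q)) = T * Q" by (rule QPX[OF TQ])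
    have e4: "(P * T) * (T * Q) = P * (T * (T * Q))" by (rule assoc_mult_mat[OF Tc(2) Tc(1) TQ])
    have e5: "P * (T * T) * Q = P * ((T * T) * Q)" by (rule assoc_mult_mat[OF Tc(2) _ Tc(3)]) (use Tc in simp)
    have e6: "(T * T) * Q = T * (T * Q)" by (rule assoc_mult_mat[OF Tc(1) Tc(1) Tc(3)])
    have "Kc * Kc = (P*T*Q)*(P*T*Q)" by (simp only: KPTQ)
    also have "\<dots> = (P*T)*(Q*(P*T*Q))" by (rule e1)
    also have "\<dots> = (P*T)*(Q*(P*(T*Q)))" by (simp only: e2)
    also have "\<dots> = (P*T)*(T*Q)" by (simp only: e3)
    also have "\<dots> = P*(T*(T*Q))" by (rule e4)
    also have "\<dots> = P*((T*T)*Q)" by (simp only: e6)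
    also have "\<dots> = P*(T*T)*Q" by (rule e5[symmetric])
    finally show ?thesis .
  qed
  have KK: "map_mat complex_of_real (K*K) = Kc * Kc" unfolding Kc_def by (rule of_real_hom.mat_hom_mult[OF K K])
  have KKc: "K * K \<in> carrier_mat m m" using K by simp
  have "complex_of_real (mtr (K * K)) = mtr (map_mat complex_of_real (K*K))"
    unfolding mtr_def using KKc K by (auto intro!: sum.cong)
  also have "\<dots> = mtr (Kc * Kc)" unfolding KK ..
  also have "\<dots> = mtr (T * T)" 
    by (rule mtr_similar'[of "T*T" m P Q]) (use Tc sq in auto)
  also have "\<dots> = sum_list (map (\<lambda>a. a^2) as)" using mtr_ut_sq[OF ut Tc(1)] dg by simp
  also have "\<dots> = sum_list (map complex_of_real (map (\<lambda>k. k^2) ks))" unfolding asks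
    by (simp add: o_def)
  also have "\<dots> = complex_of_real (sum_list (map (\<lambda>k. k^2) ks))" by (rule of_real_sum_list'[symmetric])
  finally have tr2: "sum_list (map (\<lambda>k. k^2) ks) = mtr (K * K)" using of_real_eq_iff by metis
  have len: "length ks = m" unfolding ks_def using as by simp
  have nn: "\<forall>k\<in>set ks. 0 \<le> k" unfolding ks_def using real by auto
  show ?thesis using len nn cp tr1 tr2 unfolding K_def by blast
qed

lemma card_bij_filter:
  assumes "bij_betw ed A E"
  shows "card {k\<in>A. P (ed k)} = card {e\<in>E. P e}"
proof -
  have inj: "inj_on ed {k\<in>A. P (ed k)}" using assms unfolding bij_betw_def
    by (auto intro: inj_on_subset)
  have "ed ` {k\<in>A. P (ed k)} = {e\<in>E. P e}" using assms unfolding bij_betw_def by auto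
  then show ?thesis using card_image[OF inj] by simp
qed

lemma sum_indicator: "finite A \<Longrightarrow> (\<Sum>k\<in>A. if P k then (1::real) else 0) = real (card {k\<in>A. P k})"
proof -
  assume A: "finite A"
  have e: "{k\<in>A. P k} = A \<inter> {k. P k}" by auto
  show ?thesis using A by (simp add: sum.If_cases e)
qed

lemma graph_data:
  assumes sg: "simple_graph n E" and cE: "card E = m" and n0: "0 < n"
  shows "\<exists>ks. length ks = m \<and> (\<forall>k\<in>set ks. 0 \<le> k)
    \<and> char_poly (laplacian n E) * [:0,1:] ^ m = [:0,1:] ^ n * (\<Prod>a\<leftarrow>ks. [:-a,1:])
    \<and> sum_list ks = 2 * real m
    \<and> [:0,1:] dvd char_poly (laplacian n E)
    \<and> 4 * real m \<le> sum_list (map (\<lambda>k. k^2) ks)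
    \<and> ((\<exists>v<n. degree E v \<ge> 2) \<longrightarrow> 4 * real m < sum_list (map (\<lambda>k. k^2) ks))
    \<and> ((\<forall>e1\<in>E. \<forall>e2\<in>E. e1 \<noteq> e2 \<longrightarrow> e1 \<inter> e2 = {}) \<longrightarrow> sum_list (map (\<lambda>k. k^2) ks) = 4 * real m)"
proof -
  have Esub: "E \<subseteq> {e. \<exists>i j. i < n \<and> j < n \<and> i \<noteq> j \<and> e = {i, j}}"
    using sg unfolding simple_graph_def .
  have "E \<subseteq> Pow {0..<n}" using Esub by auto
  then have finE: "finite E" by (rule finite_subset) simp
  obtain ed where bij: "bij_betw ed {0..<m} E"
    using ex_bij_betw_nat_finite[OF finE] cE by blast
  have edE: "\<And>k. k < m \<Longrightarrow> ed k \<in> E" using bij unfolding bij_betw_def by auto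
  have inj: "\<And>k l. k < m \<Longrightarrow> l < m \<Longrightarrow> ed k = ed l \<Longrightarrow> k = l"
    using bij unfolding bij_betw_def inj_on_def by auto
  define lo where "lo k = Min (ed k)" for k
  define hi where "hi k = Max (ed k)" for k
  have edge: "\<And>k. k < m \<Longrightarrow> lo k < n \<and> hi k < n \<and> lo k \<noteq> hi k \<and> ed k = {lo k, hi k}"
  proof -
    fix k assume k: "k < m"
    then obtain i j where ij: "i < n" "j < n" "i \<noteq> j" "ed k = {i,j}" using edE Esub by blast
    have "lo k = min i j" "hi k = max i j" unfolding lo_def hi_def ij(4) by auto
    then show "lo k < n \<and> hi k < n \<and> lo k \<noteq> hi k \<and> ed k = {lo k, hi k}"
      using ij by (auto simp: min_def max_def)
  qed
  define B :: "real mat" where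
    "B = mat n m (\<lambda>(u,k). if u = lo k then 1 else if u = hi k then -1 else 0)"
  have Bc: "B \<in> carrier_mat n m" unfolding B_def by simp
  have Bidx: "\<And>u k. u < n \<Longrightarrow> k < m \<Longrightarrow> B $$ (u,k) = (if u = lo k then 1 else if u = hi k then -1 else 0)"
    unfolding B_def by simp
  have Bnz: "\<And>u k. u < n \<Longrightarrow> k < m \<Longrightarrow> B $$ (u,k) \<noteq> 0 \<longleftrightarrow> u \<in> ed k"
    using Bidx edge by auto
  have Bsq: "\<And>u k. u < n \<Longrightarrow> k < m \<Longrightarrow> B $$ (u,k) * B $$ (u,k) = (if u \<in> ed k then 1 else 0)"
    using Bidx edge by auto
  have trm: "\<And>i j k. i < n \<Longrightarrow> j < n \<Longrightarrow> k < m \<Longrightarrow> i \<noteq> j \<Longrightarrow>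
      B $$ (i,k) * B $$ (j,k) = (if ed k = {i,j} then -1 else 0)"
  proof -
    fix i j k assume a: "i < n" "j < n" "k < m" "i \<noteq> j"
    have e: "lo k \<noteq> hi k" "ed k = {lo k, hi k}" using edge[OF a(3)] by auto
    show "B $$ (i,k) * B $$ (j,k) = (if ed k = {i,j} then -1 else 0)"
      using a e unfolding Bidx[OF a(1) a(3)] Bidx[OF a(2) a(3)]
      by (auto simp: doubleton_eq_iff)
  qed
  have L: "B * transpose_mat B = laplacian n E"
  proof (rule eq_matI)
    fix i j assume i: "i < dim_row (laplacian n E)" and j: "j < dim_col (laplacian n E)"
    then have i: "i < n" and j: "j < n" unfolding laplacian_def by auto
    have "(B * transpose_mat B) $$ (i,j) = (\<Sum>k\<in>{0..<m}. B $$ (i,k) * B $$ (j,k))"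
      using i j Bc by (simp add: scalar_prod_def)
    also have "\<dots> = laplacian n E $$ (i,j)"
    proof (cases "i = j")
      case True
      have "(\<Sum>k\<in>{0..<m}. B $$ (i,k) * B $$ (j,k)) = (\<Sum>k\<in>{0..<m}. if i \<in> ed k then 1 else 0)"
        using True Bsq i by (intro sum.cong) auto
      also have "\<dots> = real (card {k\<in>{0..<m}. i \<in> ed k})" by (rule sum_indicator) simp
      also have "card {k\<in>{0..<m}. i \<in> ed k} = card {e\<in>E. i \<in> e}"
        by (rule card_bij_filter[OF bij])
      finally show ?thesis using True i unfolding laplacian_def degree_def by simp
    next
      case False
      have "(\<Sum>k\<in>{0..<m}. B $$ (i,k) * B $$ (j,k)) = (\<Sum>k\<in>{0..<m}. - (if ed k = {i,j} then 1 else 0))"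
        using False trm i j by (intro sum.cong) auto
      also have "\<dots> = - real (card {k\<in>{0..<m}. ed k = {i,j}})"
        by (simp only: sum_negf sum_indicator[OF finite_atLeastLessThan])
      also have "card {k\<in>{0..<m}. ed k = {i,j}} = card {e\<in>E. e = {i,j}}"
        by (rule card_bij_filter[OF bij])
      also have "card {e\<in>E. e = {i,j}} = (if {i,j} \<in> E then 1 else 0)"
      proof (cases "{i,j} \<in> E")
        case True
        then have "{e\<in>E. e = {i,j}} = {{i,j}}" by auto
        then show ?thesis using True by simp
      next
        case False
        then have "{e\<in>E. e = {i,j}} = {}" by auto
        then show ?thesis using False by simp
      qed
      finally show ?thesis using False i j unfolding laplacian_def by simp
    qed
    finally show "(B * transpose_mat B) $$ (i,j) = laplacian n E $$ (i,j)" .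
  qed (use Bc in \<open>auto simp: laplacian_def\<close>)
  have colsum: "\<And>k. k < m \<Longrightarrow> (\<Sum>u\<in>{0..<n}. B $$ (u,k)) = 0"
  proof -
    fix k assume k: "k < m"
    have e: "lo k < n" "hi k < n" "lo k \<noteq> hi k" using edge[OF k] by auto
    have "(\<Sum>u\<in>{0..<n}. B $$ (u,k)) = (\<Sum>u\<in>{lo k, hi k}. B $$ (u,k))"
    proof (rule sum.mono_neutral_right)
      show "\<forall>u\<in>{0..<n} - {lo k, hi k}. B $$ (u, k) = 0" using Bidx k by auto
    qed (use e in auto)
    also have "\<dots> = 0" using e Bidx[OF _ k] by simp
    finally show "(\<Sum>u\<in>{0..<n}. B $$ (u,k)) = 0" .
  qed
  define w :: "real vec" where "w = vec n (\<lambda>_. 1)"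
  have w: "w \<in> carrier_vec n" unfolding w_def by simp
  have Btw: "transpose_mat B *\<^sub>v w = 0\<^sub>v m"
  proof (rule eq_vecI)
    fix k assume "k < dim_vec (0\<^sub>v m :: real vec)"
    then have k: "k < m" by simp
    have "(transpose_mat B *\<^sub>v w) $ k = (\<Sum>u\<in>{0..<n}. B $$ (u,k))"
      using k Bc unfolding w_def by (simp add: scalar_prod_def)
    then show "(transpose_mat B *\<^sub>v w) $ k = 0\<^sub>v m $ k" using colsum[OF k] k by simp
  qed (use Bc in simp)
  have Lw: "laplacian n E *\<^sub>v w = 0 \<cdot>\<^sub>v w"
  proof -
    have "laplacian n E *\<^sub>v w = B *\<^sub>v (transpose_mat B *\<^sub>v w)"
      unfolding L[symmetric] using Bc w by (simp add: assoc_mult_mat_vec[of _ n m _ n])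
    also have "\<dots> = 0\<^sub>v n" unfolding Btw using Bc by (intro eq_vecI) (auto simp: scalar_prod_def)
    also have "\<dots> = 0 \<cdot>\<^sub>v w" unfolding w_def by (intro eq_vecI) auto
    finally show ?thesis .
  qed
  have Lc: "laplacian n E \<in> carrier_mat n n" unfolding laplacian_def by simp
  have w0: "w \<noteq> 0\<^sub>v n"
  proof
    assume "w = 0\<^sub>v n"
    then have "w $ 0 = 0\<^sub>v n $ 0" by simp
    then show False using n0 unfolding w_def by simp
  qed
  have "eigenvalue (laplacian n E) 0"
    unfolding eigenvalue_def eigenvector_def using Lw w w0 Lc by auto
  then have "poly (char_poly (laplacian n E)) 0 = 0" using eigenvalue_root_char_poly[OF Lc] by simp
  then have dvdx: "[:0,1:] dvd char_poly (laplacian n E)" by (simp add: poly_eq_0_iff_dvd)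
  define K where "K = transpose_mat B * B"
  have Kc: "K \<in> carrier_mat m m" unfolding K_def using Bc by simp
  have Kidx: "\<And>k l. k < m \<Longrightarrow> l < m \<Longrightarrow> K $$ (k,l) = (\<Sum>u\<in>{0..<n}. B $$ (u,k) * B $$ (u,l))"
    unfolding K_def using Bc by (simp add: scalar_prod_def)
  have Ksym: "\<And>k l. k < m \<Longrightarrow> l < m \<Longrightarrow> K $$ (l,k) = K $$ (k,l)"
    using Kidx by (simp add: mult.commute)
  have Kdiag: "\<And>k. k < m \<Longrightarrow> K $$ (k,k) = 2"
  proof -
    fix k assume k: "k < m"
    have e: "lo k < n" "hi k < n" "lo k \<noteq> hi k" "ed k = {lo k, hi k}" using edge[OF k] by auto
    have "K $$ (k,k) = (\<Sum>u\<in>{0..<n}. if u \<in> ed k then 1 else 0)"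
      unfolding Kidx[OF k k] using Bsq k by (intro sum.cong) auto
    also have "\<dots> = real (card {u\<in>{0..<n}. u \<in> ed k})" by (rule sum_indicator) simp
    also have "{u\<in>{0..<n}. u \<in> ed k} = {lo k, hi k}" using e by auto
    finally show "K $$ (k,k) = 2" using e by simp
  qed
  have Kdisj: "\<And>k l. k < m \<Longrightarrow> l < m \<Longrightarrow> ed k \<inter> ed l = {} \<Longrightarrow> K $$ (k,l) = 0"
  proof -
    fix k l assume k: "k < m" and l: "l < m" and d: "ed k \<inter> ed l = {}"
    show "K $$ (k,l) = 0" unfolding Kidx[OF k l]
    proof (rule sum.neutral, rule ballI)
      fix u assume "u \<in> {0..<n}"
      then have u: "u < n" by simp
      show "B $$ (u,k) * B $$ (u,l) = 0"
      proof (cases "u \<in> ed k")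
        case True then have "u \<notin> ed l" using d by auto
        then show ?thesis using Bnz[OF u l] by simp
      next
        case False then show ?thesis using Bnz[OF u k] by simp
      qed
    qed
  qed
  have Kshare: "\<And>k l v. k < m \<Longrightarrow> l < m \<Longrightarrow> k \<noteq> l \<Longrightarrow> v \<in> ed k \<Longrightarrow> v \<in> ed l \<Longrightarrow> K $$ (k,l) \<noteq> 0"
  proof -
    fix k l v assume k: "k < m" and l: "l < m" and kl: "k \<noteq> l" and vk: "v \<in> ed k" and vl: "v \<in> ed l"
    have ek: "lo k < n" "hi k < n" "lo k \<noteq> hi k" "ed k = {lo k, hi k}" using edge[OF k] by auto
    have el: "lo l < n" "hi l < n" "lo l \<noteq> hi l" "ed l = {lo l, hi l}" using edge[OF l] by auto
    have v: "v < n" using vk ek by auto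
    have only: "\<And>u. u \<in> ed k \<Longrightarrow> u \<in> ed l \<Longrightarrow> u = v"
    proof (rule ccontr)
      fix u assume uk: "u \<in> ed k" and ul: "u \<in> ed l" and uv: "u \<noteq> v"
      have "ed k = {u, v}" using uk vk uv ek by auto
      moreover have "ed l = {u, v}" using ul vl uv el by auto
      ultimately show False using inj[OF k l] kl by simp
    qed
    have "K $$ (k,l) = (\<Sum>u\<in>{v}. B $$ (u,k) * B $$ (u,l))"
      unfolding Kidx[OF k l]
    proof (rule sum.mono_neutral_right)
      show "\<forall>u\<in>{0..<n} - {v}. B $$ (u, k) * B $$ (u, l) = 0"
      proof
        fix u assume "u \<in> {0..<n} - {v}"
        then have u: "u < n" "u \<noteq> v" by auto
        show "B $$ (u, k) * B $$ (u, l) = 0"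
          using Bnz[OF u(1) k] Bnz[OF u(1) l] only u(2) by auto
      qed
    qed (use v in auto)
    also have "\<dots> = B $$ (v,k) * B $$ (v,l)" by simp
    also have "\<dots> \<noteq> 0" using Bnz[OF v k] Bnz[OF v l] vk vl by simp
    finally show "K $$ (k,l) \<noteq> 0" .
  qed
  define R where "R k = (\<Sum>l\<in>{0..<m} - {k}. (K $$ (k,l))^2)" for k
  have Rnn: "\<And>k. 0 \<le> R k" unfolding R_def by (intro sum_nonneg) auto
  have trKK: "mtr (K * K) = 4 * real m + (\<Sum>k\<in>{0..<m}. R k)"
  proof -
    have "mtr (K * K) = (\<Sum>k\<in>{0..<m}. \<Sum>l\<in>{0..<m}. (K $$ (k,l))^2)"
      unfolding mtr_def using Kc Ksym
      by (auto simp: scalar_prod_def atLeast0LessThan power2_eq_square intro!: sum.cong)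
    also have "\<dots> = (\<Sum>k\<in>{0..<m}. 4 + R k)"
    proof (rule sum.cong[OF refl])
      fix k assume "k \<in> {0..<m}"
      then have k: "k < m" by simp
      have "(\<Sum>l\<in>{0..<m}. (K $$ (k,l))^2) = (K $$ (k,k))^2 + R k"
        unfolding R_def using k by (subst sum.remove[of _ k]) auto
      then show "(\<Sum>l\<in>{0..<m}. (K $$ (k,l))^2) = 4 + R k" using Kdiag[OF k] by simp
    qed
    also have "\<dots> = 4 * real m + (\<Sum>k\<in>{0..<m}. R k)" by (simp add: sum.distrib)
    finally show ?thesis .
  qed
  have trK: "mtr K = 2 * real m"
  proof -
    have "mtr K = (\<Sum>k\<in>{0..<m}. K $$ (k,k))" unfolding mtr_def using Kc by (simp add: atLeast0LessThan)
    also have "\<dots> = (\<Sum>k\<in>{0..<m}. 2)" using Kdiag by (intro sum.cong) auto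
    finally show ?thesis by simp
  qed
  obtain ks where ks: "length ks = m" "\<forall>k\<in>set ks. 0 \<le> k"
    "char_poly K = (\<Prod>a\<leftarrow>ks. [:-a,1:])" "sum_list ks = mtr K"
    "sum_list (map (\<lambda>k. k^2) ks) = mtr (K * K)"
    using spectral_data[OF Bc] unfolding K_def by blast
  have cp: "char_poly (laplacian n E) * [:0,1:] ^ m = [:0,1:] ^ n * (\<Prod>a\<leftarrow>ks. [:-a,1:])"
    using sylvester_char_poly[OF Bc] unfolding L ks(3)[unfolded K_def] .
  have ge: "4 * real m \<le> sum_list (map (\<lambda>k. k^2) ks)"
    unfolding ks(5) trKK using Rnn by (simp add: sum_nonneg)
  have strict: "(\<exists>v<n. degree E v \<ge> 2) \<longrightarrow> 4 * real m < sum_list (map (\<lambda>k. k^2) ks)"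
  proof
    assume "\<exists>v<n. degree E v \<ge> 2"
    then obtain v where v: "v < n" "2 \<le> card {e\<in>E. v \<in> e}" unfolding degree_def by blast
    then obtain e1 e2 where e12: "e1 \<in> E" "e2 \<in> E" "v \<in> e1" "v \<in> e2" "e1 \<noteq> e2"
    proof -
      assume *: "\<And>e1 e2. e1 \<in> E \<Longrightarrow> e2 \<in> E \<Longrightarrow> v \<in> e1 \<Longrightarrow> v \<in> e2 \<Longrightarrow> e1 \<noteq> e2 \<Longrightarrow> thesis"
      from v(2) obtain S where "S \<subseteq> {e\<in>E. v \<in> e}" "card S = 2"
        by (meson obtain_subset_with_card_n)
      then obtain a b where "a \<noteq> b" "{a,b} \<subseteq> {e\<in>E. v \<in> e}" by (auto simp: card_2_iff)
      then show thesis using * by auto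
    qed
    obtain k1 where k1: "k1 < m" "ed k1 = e1" using bij e12(1) unfolding bij_betw_def by force
    obtain k2 where k2: "k2 < m" "ed k2 = e2" using bij e12(2) unfolding bij_betw_def by force
    have kk: "k1 \<noteq> k2" using k1 k2 e12 by auto
    have "K $$ (k1,k2) \<noteq> 0" using Kshare[OF k1(1) k2(1) kk] e12 k1 k2 by simp
    then have "0 < R k1" unfolding R_def
      by (intro sum_pos2[of _ k2]) (use k2 kk in auto)
    then have "0 < (\<Sum>k\<in>{0..<m}. R k)" by (intro sum_pos2[of _ k1]) (use k1 Rnn in auto)
    then show "4 * real m < sum_list (map (\<lambda>k. k^2) ks)" unfolding ks(5) trKK by simp
  qed
  have match: "(\<forall>e1\<in>E. \<forall>e2\<in>E. e1 \<noteq> e2 \<longrightarrow> e1 \<inter> e2 = {}) \<longrightarrow> sum_list (map (\<lambda>k. k^2) ks) = 4 * real m"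
  proof
    assume d: "\<forall>e1\<in>E. \<forall>e2\<in>E. e1 \<noteq> e2 \<longrightarrow> e1 \<inter> e2 = {}"
    have "\<And>k. k < m \<Longrightarrow> R k = 0" unfolding R_def
    proof (rule sum.neutral, rule ballI)
      fix k l assume k: "k < m" and "l \<in> {0..<m} - {k}"
      then have l: "l < m" "l \<noteq> k" by auto
      have "ed k \<noteq> ed l" using inj[OF k l(1)] l(2) by auto
      then have "ed k \<inter> ed l = {}" using d edE[OF k] edE[OF l(1)] by auto
      then show "(K $$ (k,l))^2 = 0" using Kdisj[OF k l(1)] by simp
    qed
    then have "(\<Sum>k\<in>{0..<m}. R k) = 0" by (intro sum.neutral) auto
    then show "sum_list (map (\<lambda>k. k^2) ks) = 4 * real m" unfolding ks(5) trKK by simp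
  qed
  have s2: "sum_list ks = 2 * real m" using ks(4) trK by simp
  show ?thesis
    apply (rule exI[of _ ks])
    using ks(1) ks(2) cp s2 dvdx ge strict match by blast
qed

lemma xpow_monom: "[:0,1:] ^ k = (monom 1 k :: 'a::comm_semiring_1 poly)"
  by (induction k) (auto simp: monom_Suc)

lemma coeff_xpow_mult: "coeff ([:0,1:] ^ k * p) (k + j) = coeff (p :: 'a::comm_semiring_1 poly) j"
  unfolding xpow_monom by (simp add: coeff_monom_mult)

lemma poly_linear_prod: "poly (\<Prod>a\<leftarrow>ks. [:-a,1:]) y = (\<Prod>a\<leftarrow>ks. y - (a::real))"
  by (induction ks) (auto simp: algebra_simps)

lemma sum_sq_shift: "sum_list (map (\<lambda>k. (k - c)^2) ks) =
   sum_list (map (\<lambda>k. k^2) ks) - 2 * c * sum_list ks + c^2 * real (length ks)"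
  by (induction ks) (auto simp: algebra_simps power2_eq_square)

lemma graph_consequences:
  fixes E :: "nat set set"
  assumes cp: "char_poly (laplacian n E) * [:0,1:] ^ m = [:0,1:] ^ n * (\<Prod>a\<leftarrow>ks. [:-a,1:])"
    and len: "length ks = m" and dv: "[:0,1:] dvd char_poly (laplacian n E)"
    and cE: "card E = m"
  shows "\<forall>s\<le>m. lap_coeff n E s = (if s < n then esym ks s else 0)"
    and "\<forall>y>0. lap_Phi n E y = (\<Prod>a\<leftarrow>ks. y - a)"
    and "{y. eigenvalue (laplacian n E) y} = {y. poly (char_poly (laplacian n E)) y = 0}"
    and "finite {y. poly (char_poly (laplacian n E)) y = 0}"
    and "poly (char_poly (laplacian n E)) 0 = 0"
    and "\<forall>y. y \<noteq> 0 \<longrightarrow> (poly (char_poly (laplacian n E)) y = 0 \<longleftrightarrow> y \<in> set ks)"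
proof -
  let ?x = "[:0,1:] :: real poly"
  let ?chi = "char_poly (laplacian n E)"
  let ?Q = "\<Prod>a\<leftarrow>ks. [:-a,1:]"
  define P where "P = lap_poly n E"
  have chiP: "?chi = ?x * P" unfolding P_def lap_poly_def by (rule dvd_mult_div_cancel[OF dv, symmetric])
  have PQ: "[:0,1:] ^ (Suc m) * P = [:0,1:] ^ n * ?Q"
    using cp unfolding chiP by (simp add: algebra_simps)
  show "\<forall>s\<le>m. lap_coeff n E s = (if s < n then esym ks s else 0)"
  proof (intro allI impI)
    fix s assume sm: "s \<le> m"
    show "lap_coeff n E s = (if s < n then esym ks s else 0)"
    proof (cases "s < n")
      case True
      have "coeff P (n - 1 - s) = coeff ([:0,1:] ^ (Suc m) * P) (Suc m + (n - 1 - s))"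
        by (rule coeff_xpow_mult[symmetric])
      also have "Suc m + (n - 1 - s) = n + (length ks - s)" using True sm len by simp
      also have "coeff ([:0,1:] ^ (Suc m) * P) (n + (length ks - s)) = coeff ?Q (length ks - s)"
        unfolding PQ by (rule coeff_xpow_mult)
      also have "\<dots> = (-1)^s * esym ks s" using esym_coeff[of s ks] sm len by simp
      finally have "coeff P (n - 1 - s) = (-1)^s * esym ks s" .
      then show ?thesis using True unfolding lap_coeff_def P_def by simp
    next
      case False then show ?thesis unfolding lap_coeff_def by simp
    qed
  qed
  show "\<forall>y>0. lap_Phi n E y = (\<Prod>a\<leftarrow>ks. y - a)"
  proof (intro allI impI)
    fix y :: real assume y: "0 < y"
    have e: "y ^ Suc m * poly P y = y ^ n * poly ?Q y" using arg_cong[OF PQ, of "\<lambda>p. poly p y"] by simp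
    have ie: "int (card E) - int n + 1 = int (Suc m) - int n" using cE by simp
    have "y powi (int (card E) - int n + 1) = y powi (int (Suc m)) / y powi (int n)"
      unfolding ie using y by (intro power_int_diff) simp
    also have "\<dots> = y ^ Suc m / y ^ n" by (simp only: power_int_of_nat)
    finally have "y powi (int (card E) - int n + 1) = y ^ Suc m / y ^ n" .
    then have "lap_Phi n E y = y ^ Suc m * poly P y / y ^ n" unfolding lap_Phi_def P_def by simp
    also have "\<dots> = poly ?Q y" using e y by simp
    finally show "lap_Phi n E y = (\<Prod>a\<leftarrow>ks. y - a)" by (simp add: poly_linear_prod)
  qed
  have Lc: "laplacian n E \<in> carrier_mat n n" unfolding laplacian_def by simp
  show "{y. eigenvalue (laplacian n E) y} = {y. poly ?chi y = 0}"
    using eigenvalue_root_char_poly[OF Lc] by simp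
  have "?Q \<noteq> 0" by (auto simp: prod_list_zero_iff)
  then have "?chi \<noteq> 0" using cp by auto
  then show "finite {y. poly ?chi y = 0}" by (rule poly_roots_finite)
  show "poly ?chi 0 = 0" unfolding chiP by simp
  show "\<forall>y. y \<noteq> 0 \<longrightarrow> (poly ?chi y = 0 \<longleftrightarrow> y \<in> set ks)"
  proof (intro allI impI)
    fix y :: real assume y: "y \<noteq> 0"
    have e: "poly ?chi y * y ^ m = y ^ n * poly ?Q y" using arg_cong[OF cp, of "\<lambda>p. poly p y"] by simp
    have "poly ?chi y = 0 \<longleftrightarrow> poly ?Q y = 0" using e y
      by (metis mult_eq_0_iff power_eq_0_iff)
    also have "\<dots> \<longleftrightarrow> y \<in> set ks" unfolding poly_linear_prod by (auto simp: prod_list_zero_iff)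
    finally show "poly ?chi y = 0 \<longleftrightarrow> y \<in> set ks" .
  qed
qed

lemma matching_facts:
  shows "simple_graph (2*m) (matching_edges m)"
    and "card (matching_edges m) = m"
    and "\<forall>e1\<in>matching_edges m. \<forall>e2\<in>matching_edges m. e1 \<noteq> e2 \<longrightarrow> e1 \<inter> e2 = {}"
proof -
  have me: "matching_edges m = (\<lambda>i. {2*i, 2*i+1}) ` {..<m}"
    unfolding matching_edges_def by blast
  have dv: "\<And>i x. x \<in> {2*i, 2*i+1} \<Longrightarrow> x div 2 = (i::nat)" by auto
  show "simple_graph (2*m) (matching_edges m)"
    unfolding simple_graph_def me
  proof
    fix e assume "e \<in> (\<lambda>i. {2*i, 2*i+1}) ` {..<m}"
    then obtain i where i: "i < m" "e = {2*i, 2*i+1}" by blast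
    show "e \<in> {e. \<exists>i j. i < 2 * m \<and> j < 2 * m \<and> i \<noteq> j \<and> e = {i, j}}"
      using i by (intro CollectI exI[of _ "2*i"] exI[of _ "2*i+1"]) simp
  qed
  have "inj_on (\<lambda>i. {2*i, 2*i+1::nat}) {..<m}"
  proof (rule inj_onI)
    fix i j :: nat assume "{2*i, 2*i+1} = {2*j, 2*j+1}"
    then have "2*i \<in> {2*j, 2*j+1}" by blast
    then show "i = j" using dv[of "2*i" j] by simp
  qed
  then show "card (matching_edges m) = m" unfolding me by (simp add: card_image)
  show "\<forall>e1\<in>matching_edges m. \<forall>e2\<in>matching_edges m. e1 \<noteq> e2 \<longrightarrow> e1 \<inter> e2 = {}"
    unfolding me
  proof (intro ballI impI)
    fix e1 e2 assume e1: "e1 \<in> (\<lambda>i. {2*i, 2*i+1}) ` {..<m}" and e2: "e2 \<in> (\<lambda>i. {2*i, 2*i+1}) ` {..<m}"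
      and ne: "e1 \<noteq> e2"
    obtain i where i: "e1 = {2*i, 2*i+1}" using e1 by blast
    obtain j where j: "e2 = {2*j, 2*j+1}" using e2 by blast
    show "e1 \<inter> e2 = {}"
    proof (rule ccontr)
      assume "e1 \<inter> e2 \<noteq> {}"
      then obtain x where "x \<in> e1" "x \<in> e2" by blast
      then have "i = j" using dv[of x i] dv[of x j] i j by simp
      then show False using ne i j by simp
    qed
  qed
qed

theorem mainTheorem1:
  fixes m n :: nat and E :: "nat set set"
  assumes "m \<ge> 2"
    and "simple_graph n E"
    and "card E = m"
    and "\<exists>v < n. degree E v \<ge> 2"
  shows "(\<forall>s \<in> {2..m}. lap_coeff (2 * m) (matching_edges m) s > lap_coeff n E s)
       \<and> lap_lambda (2 * m) (matching_edges m) \<le> lap_lambda n E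
       \<and> (\<forall>x::real. x \<ge> lap_lambda n E \<longrightarrow>
            lap_Phi (2 * m) (matching_edges m) x > lap_Phi n E x)"
proof -
  note m2 = assms(1) and sg = assms(2) and cE = assms(3) and deg = assms(4)
  have n0: "0 < n" using deg by auto
  obtain ksG where G: "length ksG = m" "\<forall>k\<in>set ksG. 0 \<le> k"
    "char_poly (laplacian n E) * [:0,1:] ^ m = [:0,1:] ^ n * (\<Prod>a\<leftarrow>ksG. [:-a,1:])"
    "sum_list ksG = 2 * real m" "[:0,1:] dvd char_poly (laplacian n E)"
    "4 * real m < sum_list (map (\<lambda>k. k^2) ksG)"
    using graph_data[OF sg cE n0] deg by blast
  let ?M = "matching_edges m"
  have m0: "0 < 2 * m" using m2 by simp
  obtain ksM where M: "length ksM = m" "\<forall>k\<in>set ksM. 0 \<le> k"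
    "char_poly (laplacian (2*m) ?M) * [:0,1:] ^ m = [:0,1:] ^ (2*m) * (\<Prod>a\<leftarrow>ksM. [:-a,1:])"
    "sum_list ksM = 2 * real m" "[:0,1:] dvd char_poly (laplacian (2*m) ?M)"
    "sum_list (map (\<lambda>k. k^2) ksM) = 4 * real m"
    using graph_data[OF matching_facts(1) matching_facts(2) m0] matching_facts(3) by blast
  note gcG = graph_consequences[OF G(3) G(1) G(5) cE]
  note gcM = graph_consequences[OF M(3) M(1) M(5) matching_facts(2)]
  have "sum_list (map (\<lambda>k. (k - 2)^2) ksM) = 0"
    unfolding sum_sq_shift M(1) M(4) M(6) by simp
  then have "\<forall>k\<in>set ksM. (k - 2)^2 = 0"
    by (subst (asm) sum_list_nonneg_eq_0_iff) auto
  then have all2: "\<forall>k\<in>set ksM. k = 2" by simp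
  then have "replicate (length ksM) 2 = ksM" by (rule replicate_length_same)
  then have ksM: "ksM = replicate m 2" using M(1) by simp
  have sumG: "sum_list ksG = of_nat (length ksG) * 2" using G(1) G(4) by simp
  have neG: "\<exists>z\<in>set ksG. z \<noteq> 2"
  proof (rule ccontr)
    assume "\<not> ?thesis"
    then have "\<forall>y\<in>set ksG. y = 2" by blast
    then have "replicate (length ksG) 2 = ksG" by (rule replicate_length_same)
    then have "ksG = replicate m 2" using G(1) by simp
    then have "sum_list (map (\<lambda>k. k^2) ksG) = real m * 4" by (simp add: sum_list_replicate)
    then show False using G(6) by simp
  qed
  then obtain z where z: "z \<in> set ksG" "z \<noteq> 2" by blast
  obtain b where b: "b \<in> set ksG" "2 < b" using exists_below_above[OF sumG z] by blast
  define SG where "SG = {y. poly (char_poly (laplacian n E)) y = 0}"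
  define SM where "SM = {y. poly (char_poly (laplacian (2*m) ?M)) y = 0}"
  have lamG: "lap_lambda n E = Max SG" unfolding lap_lambda_def gcG(3) SG_def ..
  have lamM: "lap_lambda (2*m) ?M = Max SM" unfolding lap_lambda_def gcM(3) SM_def ..
  have finG: "finite SG" unfolding SG_def using gcG(4) .
  have finM: "finite SM" unfolding SM_def using gcM(4) .
  have bG: "b \<in> SG" unfolding SG_def using gcG(6) b by auto
  have lamGb: "b \<le> lap_lambda n E" unfolding lamG using finG bG by simp
  have lamM2: "lap_lambda (2*m) ?M = 2"
  proof -
    have "2 \<in> set ksM" unfolding ksM using m2 by simp
    then have "2 \<in> SM" unfolding SM_def using gcM(6) by auto
    moreover have "\<forall>y\<in>SM. y \<le> 2"
    proof
      fix y assume y: "y \<in> SM"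
      show "y \<le> 2"
      proof (cases "y = 0")
        case False
        then have "y \<in> set ksM" using y gcM(6) unfolding SM_def by auto
        then show ?thesis using all2 by simp
      qed simp
    qed
    ultimately show ?thesis unfolding lamM using finM by (intro Max_eqI) auto
  qed
  have part1: "\<forall>s \<in> {2..m}. lap_coeff (2 * m) ?M s > lap_coeff n E s"
  proof
    fix s assume s: "s \<in> {2..m}"
    then have s2: "2 \<le> s" and sm: "s \<le> m" by auto
    have cM: "lap_coeff (2*m) ?M s = of_nat (m choose s) * 2 ^ s"
      using gcM(1) sm s2 unfolding ksM by (simp add: esym_replicate)
    have pos: "0 < of_nat (m choose s) * (2::real) ^ s" using sm by simp
    show "lap_coeff (2 * m) ?M s > lap_coeff n E s"
    proof (cases "s < n")
      case True
      have "lap_coeff n E s = esym ksG s" using gcG(1) sm True by simp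
      also have "\<dots> < of_nat (length ksG choose s) * 2 ^ s"
        using esym_strict[OF G(2) sumG neG s2] sm G(1) by simp
      finally show ?thesis unfolding cM using G(1) by simp
    next
      case False
      then have "lap_coeff n E s = 0" using gcG(1) sm by simp
      then show ?thesis unfolding cM using pos by simp
    qed
  qed
  have part2: "lap_lambda (2 * m) ?M \<le> lap_lambda n E" using lamM2 lamGb b by simp
  have part3: "\<forall>x::real. x \<ge> lap_lambda n E \<longrightarrow> lap_Phi (2 * m) ?M x > lap_Phi n E x"
  proof (intro allI impI)
    fix x :: real assume x: "x \<ge> lap_lambda n E"
    have xpos: "0 < x" using x lamGb b by simp
    have le: "\<forall>z\<in>set ksG. z \<le> x"
    proof
      fix z assume zk: "z \<in> set ksG"
      show "z \<le> x"
      proof (cases "z = 0")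
        case True then show ?thesis using xpos by simp
      next
        case False
        then have "z \<in> SG" unfolding SG_def using gcG(6) zk by auto
        then have "z \<le> lap_lambda n E" unfolding lamG using finG by simp
        then show ?thesis using x by simp
      qed
    qed
    have "lap_Phi n E x = (\<Prod>a\<leftarrow>ksG. x - a)" using gcG(2) xpos by simp
    also have "\<dots> < (x - 2) ^ length ksG" by (rule prod_strict[OF le sumG neG])
    also have "\<dots> = lap_Phi (2 * m) ?M x"
      using gcM(2) xpos unfolding ksM using G(1) by (simp add: prod_list_replicate)
    finally show "lap_Phi (2 * m) ?M x > lap_Phi n E x" .
  qed
  show ?thesis using part1 part2 part3 by blast
qed

end
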